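(* Let $G$ be a bipartite graph with colour classes $V$ and $W$, where $\#V=v$ and $\#W=w$, and suppose $G$ contains no cycle of length $4$ and no cycle of length $6$. (i) If $w>\lfloor v^2/4\rfloor$, then at least $\lceil w-v^2/4\rceil$ vertices of $W$ have degree $0$ or $1$. (ii) If every vertex of $G$ has degree at least $2$, then $w\le\lfloor v^2/4\rfloor$ and $v\le\lfloor w^2/4\rfloor$. *)

theory Defs
  imports Complex_Main
begin

definition bipartite_graph :: "'a set \<Rightarrow> 'a set \<Rightarrow> ('a \<Rightarrow> 'a \<Rightarrow> bool) \<Rightarrow> bool" where
  "bipartite_graph V W E \<longleftrightarrow>
     finite V \<and> finite W \<and> V \<inter> W = {} \<and>
     (\<forall>x y. E x y \<longrightarrow> E y x) \<and>
     (\<forall>x y. E x y \<longrightarrow> (x \<in> V \<and> y \<in> W) \<or> (x \<in> W \<and> y \<in> V))"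

definition has_cycle :: "('a \<Rightarrow> 'a \<Rightarrow> bool) \<Rightarrow> nat \<Rightarrow> bool" where
  "has_cycle E k \<longleftrightarrow>
     (\<exists>xs. length xs = k \<and> distinct xs \<and> (\<forall>i<k. E (xs ! i) (xs ! ((i + 1) mod k))))"

definition degree :: "('a \<Rightarrow> 'a \<Rightarrow> bool) \<Rightarrow> 'a \<Rightarrow> nat" where
  "degree E x = card {y. E x y}"

end

theory Submission
  imports Defs
begin

lemma edge_shape:
  assumes "card e = 2" "e \<inter> {x,y} \<noteq> {}" "e \<noteq> {x,y}" "x \<noteq> y"
  shows "\<exists>u z. u \<in> {x,y} \<and> z \<notin> {x,y} \<and> e = {u,z}"
proof -
  obtain a b where e: "e = {a,b}" "a \<noteq> b" using assms(1) by (auto simp: card_2_iff)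
  show ?thesis
  proof (cases "a \<in> {x,y}")
    case True
    then have "b \<notin> {x,y}" using assms e by auto
    then show ?thesis using True e by blast
  next
    case False
    then have "b \<in> {x,y}" using assms e by auto
    then show ?thesis using False e by blast
  qed
qed

lemma mantel:
  "finite V \<Longrightarrow> \<forall>e\<in>F. e \<subseteq> V \<and> card e = 2 \<Longrightarrow> (\<forall>a b c. \<not>({a,b}\<in>F \<and> {b,c}\<in>F \<and> {a,c}\<in>F))
   \<Longrightarrow> 4 * card F \<le> card V ^ 2"
proof (induction "card V" arbitrary: V F rule: less_induct)
  case less
  show ?case
  proof (cases "F = {}")
    case True then show ?thesis by simp
  next
    case False
    then obtain e where "e \<in> F" by blast
    with less.prems obtain x y where xy: "e = {x,y}" "x \<noteq> y" "e \<subseteq> V" by (auto simp: card_2_iff)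
    define V' where "V' = V - {x,y}"
    define F' where "F' = {e\<in>F. e \<subseteq> V'}"
    define S where "S = {e\<in>F. e \<inter> {x,y} \<noteq> {}} - {{x,y}}"
    have finF: "finite F"
      by (rule finite_subset[of F "Pow V"]) (use less.prems in auto)
    have cV': "card V' = card V - 2" using xy less.prems(1) unfolding V'_def
      by (simp add: card_Diff_subset)
    have cV: "card V \<ge> 2" using xy less.prems(1)
      by (metis card_2_iff card_mono)
    have IH: "4 * card F' \<le> card V' ^ 2"
      apply (rule less.hyps)
      using cV cV' less.prems unfolding F'_def V'_def by auto
    have sub: "F \<subseteq> F' \<union> insert {x,y} S"
      using less.prems(2) unfolding F'_def S_def V'_def by auto
    define g where "g e = the_elem (e - {x,y})" for e
    have shape: "\<exists>u z. u \<in> {x,y} \<and> z \<notin> {x,y} \<and> ee = {u,z} \<and> z \<in> V' \<and> g ee = z" if "ee \<in> S" for ee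
    proof -
      from that have h: "card ee = 2" "ee \<inter> {x,y} \<noteq> {}" "ee \<noteq> {x,y}" "ee \<subseteq> V"
        using less.prems(2) unfolding S_def by auto
      from edge_shape[OF h(1-3) xy(2)] obtain u z where "u \<in> {x,y}" "z \<notin> {x,y}" "ee = {u,z}"
        by blast
      moreover have "ee - {x,y} = {z}" using calculation by auto
      ultimately show ?thesis using \<open>ee \<subseteq> V\<close> unfolding g_def V'_def by auto
    qed
    have inj: "inj_on g S"
    proof
      fix e1 e2 assume a: "e1 \<in> S" "e2 \<in> S" "g e1 = g e2"
      obtain u1 z1 where 1: "u1 \<in> {x,y}" "z1 \<notin> {x,y}" "e1 = {u1,z1}" "g e1 = z1" using shape a(1) by blast
      obtain u2 z2 where 2: "u2 \<in> {x,y}" "z2 \<notin> {x,y}" "e2 = {u2,z2}" "g e2 = z2" using shape a(2) by blast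
      have z: "z1 = z2" using 1 2 a by simp
      have Fm: "e1 \<in> F" "e2 \<in> F" "{x,y} \<in> F" using a xy \<open>e \<in> F\<close> unfolding S_def by auto
      show "e1 = e2"
      proof (rule ccontr)
        assume "e1 \<noteq> e2"
        then have "u1 \<noteq> u2" using 1 2 z by auto
        then have "{x,z1} \<in> F \<and> {y,z1} \<in> F" using 1 2 z Fm by (auto simp: insert_commute)
        then show False using less.prems(3) Fm(3) by (metis insert_commute)
      qed
    qed
    have "g ` S \<subseteq> V'" using shape by blast
    then have cS: "card S \<le> card V'"
      using inj less.prems(1) unfolding V'_def by (metis card_inj_on_le finite_Diff)
    have "card F \<le> card (F' \<union> insert {x,y} S)"
      by (rule card_mono) (use finF sub in \<open>auto simp: F'_def S_def\<close>)
    also have "\<dots> \<le> card F' + card (insert {x,y} S)" by (rule card_Un_le)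
    also have "\<dots> \<le> card F' + (card S + 1)"
    proof -
      have "finite S" using finF unfolding S_def by simp
      then show ?thesis by (simp add: card_insert_if)
    qed
    finally have "4 * card F \<le> 4 * card F' + 4 * card V' + 4" using cS by linarith
    also have "\<dots> \<le> card V' ^ 2 + 4 * card V' + 4" using IH by linarith
    also have "\<dots> = (card V' + 2) ^ 2" by (simp add: power2_eq_square algebra_simps)
    also have "card V' + 2 = card V" using cV cV' by simp
    finally show ?thesis .
  qed
qed

lemma cyc4:
  assumes "E a b" "E b c" "E c d" "E d a" "distinct [a,b,c,d]"
  shows "has_cycle E 4"
  unfolding has_cycle_def
proof (intro exI[of _ "[a,b,c,d]"] conjI allI impI)
  fix i :: nat assume "i < 4"
  then have "i = 0 \<or> i = 1 \<or> i = 2 \<or> i = 3" by arith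
  then show "E ([a,b,c,d] ! i) ([a,b,c,d] ! ((i + 1) mod 4))" using assms by auto
qed (use assms in auto)

lemma cyc6:
  assumes "E a b" "E b c" "E c d" "E d f" "E f g" "E g a" "distinct [a,b,c,d,f,g]"
  shows "has_cycle E 6"
  unfolding has_cycle_def
proof (intro exI[of _ "[a,b,c,d,f,g]"] conjI allI impI)
  fix i :: nat assume "i < 6"
  then have "i = 0 \<or> i = 1 \<or> i = 2 \<or> i = 3 \<or> i = 4 \<or> i = 5" by arith
  then show "E ([a,b,c,d,f,g] ! i) ([a,b,c,d,f,g] ! ((i + 1) mod 6))" using assms by auto
qed (use assms in auto)

lemma W2_bound:
  assumes bg: "bipartite_graph V W E" and c4: "\<not> has_cycle E 4" and c6: "\<not> has_cycle E 6"
  shows "4 * card {w\<in>W. 2 \<le> degree E w} \<le> card V ^ 2"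
proof -
  define W2 where "W2 = {w\<in>W. 2 \<le> degree E w}"
  have fin: "finite V" "finite W" and disj: "V \<inter> W = {}" and sym: "\<And>x y. E x y \<Longrightarrow> E y x"
    and bip: "\<And>x y. E x y \<Longrightarrow> (x \<in> V \<and> y \<in> W) \<or> (x \<in> W \<and> y \<in> V)"
    using bg unfolding bipartite_graph_def by blast+
  have NV: "{y. E w y} \<subseteq> V" if "w \<in> W" for w using bip that disj by blast
  define p where "p w = (SOME e. e \<subseteq> {y. E w y} \<and> card e = 2)" for w
  have p: "p w \<subseteq> {y. E w y} \<and> card (p w) = 2" if "w \<in> W2" for w
  proof -
    have "2 \<le> card {y. E w y}" "w \<in> W" using that unfolding W2_def degree_def by auto
    then obtain T where "T \<subseteq> {y. E w y}" "card T = 2"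
      by (meson obtain_subset_with_card_n)
    then show ?thesis unfolding p_def by (rule someI[where P="\<lambda>e. e \<subseteq> {y. E w y} \<and> card e = 2", OF conjI])
  qed
  have pV: "p w \<subseteq> V" if "w \<in> W2" for w using p[OF that] NV that unfolding W2_def by blast
  have inj: "inj_on p W2"
  proof
    fix w1 w2 assume a: "w1 \<in> W2" "w2 \<in> W2" "p w1 = p w2"
    show "w1 = w2"
    proof (rule ccontr)
      assume ne: "w1 \<noteq> w2"
      obtain x y where xy: "p w1 = {x,y}" "x \<noteq> y" using p[OF a(1)] by (auto simp: card_2_iff)
      have "E w1 x" "E w1 y" "E w2 x" "E w2 y" using p[OF a(1)] p[OF a(2)] xy a(3) by auto
      moreover have "x \<in> V" "y \<in> V" using pV[OF a(1)] xy by auto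
      moreover have "w1 \<in> W" "w2 \<in> W" using a unfolding W2_def by auto
      ultimately have "has_cycle E 4"
        using cyc4[of E x w1 y w2] sym disj xy ne by auto
      then show False using c4 by simp
    qed
  qed
  have tri: "\<forall>a b c. \<not>({a,b}\<in>p ` W2 \<and> {b,c}\<in>p ` W2 \<and> {a,c}\<in>p ` W2)"
  proof (intro allI notI)
    fix a b c assume "{a,b}\<in>p ` W2 \<and> {b,c}\<in>p ` W2 \<and> {a,c}\<in>p ` W2"
    then obtain w1 w2 w3 where w: "w1 \<in> W2" "w2 \<in> W2" "w3 \<in> W2"
      "p w1 = {a,b}" "p w2 = {b,c}" "p w3 = {a,c}" by (metis imageE)
    have "a \<noteq> b" "b \<noteq> c" "a \<noteq> c" using p[OF w(1)] p[OF w(2)] p[OF w(3)] w(4-6) by auto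
    have "w1 \<noteq> w2" "w2 \<noteq> w3" "w1 \<noteq> w3" using w \<open>a \<noteq> b\<close> \<open>b \<noteq> c\<close> \<open>a \<noteq> c\<close>
      by (auto simp: doubleton_eq_iff)
    have E: "E w1 a" "E w1 b" "E w2 b" "E w2 c" "E w3 a" "E w3 c" using p[OF w(1)] p[OF w(2)] p[OF w(3)] w(4-6) by auto
    have "a \<in> V" "b \<in> V" "c \<in> V" using pV w by auto
    moreover have "w1 \<in> W" "w2 \<in> W" "w3 \<in> W" using w unfolding W2_def by auto
    ultimately have "has_cycle E 6"
      using cyc6[of E a w1 b w2 c w3] E sym disj \<open>w1 \<noteq> w2\<close> \<open>w2 \<noteq> w3\<close> \<open>w1 \<noteq> w3\<close>
        \<open>a \<noteq> b\<close> \<open>b \<noteq> c\<close> \<open>a \<noteq> c\<close> by auto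
    then show False using c6 by simp
  qed
  have "4 * card (p ` W2) \<le> card V ^ 2"
    by (rule mantel[OF fin(1) _ tri]) (use p pV in auto)
  then show ?thesis using inj card_image unfolding W2_def by metis
qed

lemma real4: "4 * k \<le> (n::nat) ^ 2 \<Longrightarrow> real k \<le> real n ^ 2 / 4"
proof -
  assume "4 * k \<le> n ^ 2"
  then have "real (4 * k) \<le> real (n ^ 2)" by (rule of_nat_mono)
  then show ?thesis by simp
qed

theorem proposition2p2:
  fixes V W :: "'a set" and E :: "'a \<Rightarrow> 'a \<Rightarrow> bool"
  assumes "bipartite_graph V W E"
    and "\<not> has_cycle E 4"
    and "\<not> has_cycle E 6"
  shows "(int (card W) > \<lfloor>real (card V) ^ 2 / 4\<rfloor> \<longrightarrow>
           \<lceil>real (card W) - real (card V) ^ 2 / 4\<rceil> \<le> int (card {x \<in> W. degree E x = 0 \<or> degree E x = 1}))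
       \<and> ((\<forall>x \<in> V \<union> W. degree E x \<ge> 2) \<longrightarrow>
           int (card W) \<le> \<lfloor>real (card V) ^ 2 / 4\<rfloor> \<and> int (card V) \<le> \<lfloor>real (card W) ^ 2 / 4\<rfloor>)"
proof -
  have bg2: "bipartite_graph W V E" using assms(1) unfolding bipartite_graph_def by blast
  have b1: "4 * card {w\<in>W. 2 \<le> degree E w} \<le> card V ^ 2" by (rule W2_bound[OF assms])
  have b2: "4 * card {w\<in>V. 2 \<le> degree E w} \<le> card W ^ 2" by (rule W2_bound[OF bg2 assms(2,3)])
  have finW: "finite W" "finite V" using assms(1) unfolding bipartite_graph_def by auto
  define A where "A = {w\<in>W. 2 \<le> degree E w}"
  define B where "B = {x \<in> W. degree E x = 0 \<or> degree E x = 1}"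
  have "W = A \<union> B" "A \<inter> B = {}" unfolding A_def B_def by auto
  then have cW: "card W = card A + card B" using finW by (metis card_Un_disjoint finite_Un)
  have "real (card A) \<le> real (card V) ^ 2 / 4" using b1 unfolding A_def by (rule real4)
  then have i: "\<lceil>real (card W) - real (card V) ^ 2 / 4\<rceil> \<le> int (card B)"
    using cW by (simp add: ceiling_le_iff)
  have ii: "(\<forall>x \<in> V \<union> W. degree E x \<ge> 2) \<longrightarrow>
           int (card W) \<le> \<lfloor>real (card V) ^ 2 / 4\<rfloor> \<and> int (card V) \<le> \<lfloor>real (card W) ^ 2 / 4\<rfloor>"
  proof
    assume d: "\<forall>x \<in> V \<union> W. degree E x \<ge> 2"
    then have "{w\<in>W. 2 \<le> degree E w} = W" "{w\<in>V. 2 \<le> degree E w} = V" by auto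
    then have "4 * card W \<le> card V ^ 2" "4 * card V \<le> card W ^ 2" using b1 b2 by auto
    note h = this
    have "real (card W) \<le> real (card V) ^ 2 / 4" "real (card V) \<le> real (card W) ^ 2 / 4"
      by (rule real4[OF h(1)], rule real4[OF h(2)])
    then show "int (card W) \<le> \<lfloor>real (card V) ^ 2 / 4\<rfloor> \<and> int (card V) \<le> \<lfloor>real (card W) ^ 2 / 4\<rfloor>"
      by (simp add: le_floor_iff)
  qed
  show ?thesis using i ii unfolding B_def by blast
qed

end
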